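(* For every $n\ge1$, the set $\mathrm{StoRec}_n$ of SR states on $K_n^0$ equals $\mathrm{conv}(\mathrm{DetRec}_n)\cap\mathbb{Z}^n$, where $\mathrm{DetRec}_n$ is the set of DR states on $K_n^0$. That is, $c\in\mathbb{Z}_{\ge 0}^n$ is SR if and only if there exist DR states $c^{(1)},\dots,c^{(k)}$ and $\lambda_1,\dots,\lambda_k\in[0,1]$ with $\sum_i\lambda_i=1$ and $c=\sum_i\lambda_i c^{(i)}$.
   Context: $K_n^0$ is the complete graph on vertex set $\{0,1,\dots,n\}$ with sink $0$; every vertex has degree $n$. A configuration is $c\in\mathbb{Z}_{\ge0}^n$, stable if $c_i\le n-1$ for all $i$. ASM: an unstable vertex topples by sending one grain to each neighbour (grains to the sink disappear). SSM (parameter $p\in(0,1)$): an unstable vertex $i$, independently for each incident edge, sends one grain along it with probability $p$, otherwise keeps it. Each model gives a Markov chain on stable configurations: add a grain at vertex $i$ with probability $\mu_i>0$, then stabilise. DR = recurrent for the ASM chain, SR = recurrent for the SSM chain. $\mathrm{conv}$ denotes convex hull in $\mathbb{R}^n$. *)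

theory Defs
  imports "HOL-Analysis.Analysis"
begin

text \<open>Sandpile models on the complete graph K_n^0. The non-sink vertices are the
elements of a finite type 'n (so n = CARD('n) >= 1); the sink is represented by None
in 'n option. Every vertex has degree n.\<close>

definition stable :: "('n::finite \<Rightarrow> nat) \<Rightarrow> bool" where
  "stable c \<longleftrightarrow> (\<forall>i. c i \<le> CARD('n) - 1)"

definition nbrs :: "'n::finite \<Rightarrow> 'n option set" where
  "nbrs v = insert None (Some ` (UNIV - {v}))"

definition asm_topple :: "('n::finite \<Rightarrow> nat) \<Rightarrow> 'n \<Rightarrow> ('n \<Rightarrow> nat) \<Rightarrow> bool" where
  "asm_topple c v d \<longleftrightarrow> CARD('n) \<le> c v \<and>
     d = (\<lambda>w. if w = v then c v - CARD('n) else c w + 1)"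

text \<open>SSM toppling of an unstable vertex v with parameter p: the set S of edges along
which a grain is sent is chosen with probability p^|S| (1-p)^(n-|S|); a toppling outcome
is possible iff this probability is positive.\<close>
definition ssm_topple :: "real \<Rightarrow> ('n::finite \<Rightarrow> nat) \<Rightarrow> 'n \<Rightarrow> ('n \<Rightarrow> nat) \<Rightarrow> bool" where
  "ssm_topple p c v d \<longleftrightarrow> CARD('n) \<le> c v \<and>
     (\<exists>S. S \<subseteq> nbrs v \<and> p ^ card S * (1 - p) ^ (CARD('n) - card S) > 0 \<and>
        d = (\<lambda>w. if w = v then c v - card S else if Some w \<in> S then c w + 1 else c w))"

definition stabilises_to ::
  "(('n::finite \<Rightarrow> nat) \<Rightarrow> 'n \<Rightarrow> ('n \<Rightarrow> nat) \<Rightarrow> bool) \<Rightarrow> ('n \<Rightarrow> nat) \<Rightarrow> ('n \<Rightarrow> nat) \<Rightarrow> bool" where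
  "stabilises_to tp c d \<longleftrightarrow> (\<lambda>x y. \<exists>v. tp x v y)\<^sup>*\<^sup>* c d \<and> stable d"

text \<open>One step of the Markov chain on stable configurations, with positive probability:
add a grain at i (probability mu i), then stabilise.\<close>
definition chain_step ::
  "('n::finite \<Rightarrow> real) \<Rightarrow> (('n \<Rightarrow> nat) \<Rightarrow> 'n \<Rightarrow> ('n \<Rightarrow> nat) \<Rightarrow> bool) \<Rightarrow> ('n \<Rightarrow> nat) \<Rightarrow> ('n \<Rightarrow> nat) \<Rightarrow> bool" where
  "chain_step \<mu> tp c d \<longleftrightarrow> stable c \<and> (\<exists>i. \<mu> i > 0 \<and> stabilises_to tp (c(i := c i + 1)) d)"

definition recurrent ::
  "('n::finite \<Rightarrow> real) \<Rightarrow> (('n \<Rightarrow> nat) \<Rightarrow> 'n \<Rightarrow> ('n \<Rightarrow> nat) \<Rightarrow> bool) \<Rightarrow> ('n \<Rightarrow> nat) \<Rightarrow> bool" where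
  "recurrent \<mu> tp c \<longleftrightarrow> stable c \<and>
     (\<forall>d. (chain_step \<mu> tp)\<^sup>*\<^sup>* c d \<longrightarrow> (chain_step \<mu> tp)\<^sup>*\<^sup>* d c)"

definition DR :: "('n::finite \<Rightarrow> real) \<Rightarrow> ('n \<Rightarrow> nat) \<Rightarrow> bool" where
  "DR \<mu> c \<longleftrightarrow> recurrent \<mu> asm_topple c"

definition SR :: "real \<Rightarrow> ('n::finite \<Rightarrow> real) \<Rightarrow> ('n \<Rightarrow> nat) \<Rightarrow> bool" where
  "SR p \<mu> c \<longleftrightarrow> recurrent \<mu> (ssm_topple p) c"

definition vec_of :: "('n::finite \<Rightarrow> nat) \<Rightarrow> real ^ 'n" where
  "vec_of c = (\<chi> i. real (c i))"

end

theory Submission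
  imports Defs
begin


definition cmax :: "'n::finite \<Rightarrow> nat" where "cmax = (\<lambda>_. CARD('n) - 1)"

lemma stable_cmax: "stable (cmax :: 'n::finite \<Rightarrow> nat)"
  by (simp add: stable_def cmax_def)

lemma chain_add:
  fixes c :: "'n::finite \<Rightarrow> nat"
  assumes "stable c" "c i < CARD('n) - 1" "\<mu> i > 0"
  shows "chain_step \<mu> tp c (c(i := c i + 1))"
  using assms unfolding chain_step_def stabilises_to_def stable_def by auto

lemma chain_stable: "chain_step \<mu> tp x y \<Longrightarrow> stable y"
  by (auto simp: chain_step_def stabilises_to_def)

lemma chain_star_stable: "(chain_step \<mu> tp)\<^sup>*\<^sup>* x y \<Longrightarrow> stable x \<Longrightarrow> stable y"
  by (induction rule: rtranclp_induct) (auto dest: chain_stable)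

lemma reach_cmax:
  fixes c :: "'n::finite \<Rightarrow> nat"
  assumes mu: "\<forall>i. \<mu> i > 0" and "stable c"
  shows "(chain_step \<mu> tp)\<^sup>*\<^sup>* c cmax"
proof -
  have "\<forall>c::'n\<Rightarrow>nat. stable c \<longrightarrow> (\<Sum>i\<in>UNIV. CARD('n) - 1 - c i) = k \<longrightarrow> (chain_step \<mu> tp)\<^sup>*\<^sup>* c cmax" for k
  proof (induction k)
    case 0
    show ?case
    proof (intro allI impI)
      fix c :: "'n \<Rightarrow> nat" assume s: "stable c" and "(\<Sum>i\<in>UNIV. CARD('n) - 1 - c i) = 0"
      then have h: "CARD('n) \<le> c i + 1" for i by simp
      then have "\<forall>i. CARD('n) - 1 \<le> c i" by (metis add_diff_cancel_right' diff_le_mono)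
      then have "c = cmax" using s by (auto simp: stable_def cmax_def fun_eq_iff intro: antisym)
      then show "(chain_step \<mu> tp)\<^sup>*\<^sup>* c cmax" by simp
    qed
  next
    case (Suc k)
    show ?case
    proof (intro allI impI)
      fix c :: "'n \<Rightarrow> nat" assume s: "stable c" and k: "(\<Sum>i\<in>UNIV. CARD('n) - 1 - c i) = Suc k"
      then obtain i where i: "c i < CARD('n) - 1"
        by (metis (no_types, lifting) diff_is_0_eq' leI nat.simps(3) sum.neutral)
      let ?c = "c(i := c i + 1)"
      have st: "chain_step \<mu> tp c ?c" using chain_add[OF s i] mu by auto
      have "(\<Sum>j\<in>UNIV. CARD('n) - 1 - c j) = (CARD('n) - 1 - c i) + (\<Sum>j\<in>UNIV-{i}. CARD('n) - 1 - c j)"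
        by (rule sum.remove) auto
      moreover have "(\<Sum>j\<in>UNIV. CARD('n) - 1 - ?c j) = (CARD('n) - 1 - ?c i) + (\<Sum>j\<in>UNIV-{i}. CARD('n) - 1 - ?c j)"
        by (rule sum.remove) auto
      moreover have "(\<Sum>j\<in>UNIV-{i}. CARD('n) - 1 - ?c j) = (\<Sum>j\<in>UNIV-{i}. CARD('n) - 1 - c j)"
        by (rule sum.cong) auto
      ultimately have "(\<Sum>j\<in>UNIV. CARD('n) - 1 - ?c j) = k" using k i by simp
      moreover have "stable ?c" using chain_stable[OF st] .
      ultimately have "(chain_step \<mu> tp)\<^sup>*\<^sup>* ?c cmax" using Suc.IH by blast
      with st show "(chain_step \<mu> tp)\<^sup>*\<^sup>* c cmax" by (rule converse_rtranclp_into_rtranclp)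
    qed
  qed
  then show ?thesis using assms by blast
qed

lemma recurrent_iff:
  fixes c :: "'n::finite \<Rightarrow> nat"
  assumes mu: "\<forall>i. \<mu> i > 0"
  shows "recurrent \<mu> tp c \<longleftrightarrow> stable c \<and> (chain_step \<mu> tp)\<^sup>*\<^sup>* cmax c"
proof
  assume r: "recurrent \<mu> tp c"
  then have "stable c" by (simp add: recurrent_def)
  then show "stable c \<and> (chain_step \<mu> tp)\<^sup>*\<^sup>* cmax c"
    using r reach_cmax[OF mu] unfolding recurrent_def by blast
next
  assume a: "stable c \<and> (chain_step \<mu> tp)\<^sup>*\<^sup>* cmax c"
  show "recurrent \<mu> tp c" unfolding recurrent_def
  proof (intro conjI allI impI)
    show "stable c" using a by simp
    fix d assume "(chain_step \<mu> tp)\<^sup>*\<^sup>* c d"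
    then have "stable d" using chain_star_stable a by blast
    then have "(chain_step \<mu> tp)\<^sup>*\<^sup>* d cmax" using reach_cmax[OF mu] by blast
    then show "(chain_step \<mu> tp)\<^sup>*\<^sup>* d c" using a by (meson rtranclp_trans)
  qed
qed



abbreviation T :: "('n::finite \<Rightarrow> nat) \<Rightarrow> ('n \<Rightarrow> nat) \<Rightarrow> bool" where
  "T \<equiv> (\<lambda>x y. \<exists>v. asm_topple x v y)"

definition fsc :: "('n::finite \<Rightarrow> nat) \<Rightarrow> bool" where
  "fsc c \<longleftrightarrow> (\<forall>A. A \<noteq> {} \<longrightarrow> (\<exists>i\<in>A. card A \<le> c i + 1))"

lemma card_minus_one: "card (UNIV - {v::'n::finite}) = CARD('n) - 1"
  by (simp add: card_Diff_singleton)

lemma asm_sum: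
  fixes x :: "'n::finite \<Rightarrow> nat"
  assumes "asm_topple x v y" shows "sum y UNIV + 1 = sum x UNIV"
proof -
  have y: "y = (\<lambda>w. if w = v then x v - CARD('n) else x w + 1)" and xv: "CARD('n) \<le> x v"
    using assms by (auto simp: asm_topple_def)
  have "sum y UNIV = y v + sum y (UNIV - {v})" by (rule sum.remove) auto
  also have "sum y (UNIV - {v}) = sum (\<lambda>w. x w + 1) (UNIV - {v})" by (rule sum.cong) (auto simp: y)
  also have "\<dots> = sum x (UNIV - {v}) + sum (\<lambda>_. 1) (UNIV - {v})" by (rule sum.distrib)
  also have "\<dots> = sum x (UNIV - {v}) + (CARD('n) - 1)" by (simp add: card_minus_one)
  finally have eq: "sum y UNIV = y v + (sum x (UNIV - {v}) + (CARD('n) - 1))" .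
  have "sum x UNIV = x v + sum x (UNIV - {v})" by (rule sum.remove) auto
  moreover have "CARD('n) \<ge> 1" by (simp add: Suc_leI)
  moreover have "y v = x v - CARD('n)" by (simp add: y)
  ultimately show ?thesis using xv eq by linarith
qed

lemma stable_no_topple: "stable (x::'n::finite\<Rightarrow>nat) \<Longrightarrow> \<not> asm_topple x v y"
proof
  assume "stable x" "asm_topple x v y"
  then have "x v \<le> CARD('n) - 1" "CARD('n) \<le> x v" by (auto simp: stable_def asm_topple_def)
  moreover have "CARD('n) \<ge> 1" by (simp add: Suc_leI)
  ultimately show False by linarith
qed

lemma asm_det: "asm_topple x v y \<Longrightarrow> asm_topple x v z \<Longrightarrow> y = z"
  by (simp add: asm_topple_def)

lemma asm_diamond:
  fixes x :: "'n::finite \<Rightarrow> nat"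
  assumes "asm_topple x v y" "asm_topple x w z" "v \<noteq> w"
  shows "\<exists>u. asm_topple y w u \<and> asm_topple z v u"
proof -
  let ?u = "\<lambda>k. if k = v then x v - CARD('n) + 1 else if k = w then x w - CARD('n) + 1 else x k + 2"
  have y: "y = (\<lambda>k. if k = v then x v - CARD('n) else x k + 1)" "CARD('n) \<le> x v"
    using assms(1) unfolding asm_topple_def by auto
  have z: "z = (\<lambda>k. if k = w then x w - CARD('n) else x k + 1)" "CARD('n) \<le> x w"
    using assms(2) unfolding asm_topple_def by auto
  have "asm_topple y w ?u" unfolding asm_topple_def
  proof
    show "CARD('n) \<le> y w" using y z assms(3) by simp
    show "?u = (\<lambda>k. if k = w then y w - CARD('n) else y k + 1)"
      using y z assms(3) by (intro ext) (auto simp: Suc_diff_le)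
  qed
  moreover have "asm_topple z v ?u" unfolding asm_topple_def
  proof
    show "CARD('n) \<le> z v" using y z assms(3) by simp
    show "?u = (\<lambda>k. if k = v then z v - CARD('n) else z k + 1)"
      using y z assms(3) by (intro ext) (auto simp: Suc_diff_le)
  qed
  ultimately show ?thesis by blast
qed

lemma T_star_stable_eq: "T\<^sup>*\<^sup>* x y \<Longrightarrow> stable x \<Longrightarrow> y = x"
  by (induction rule: converse_rtranclp_induct) (auto dest: stable_no_topple)

lemma asm_term: "\<exists>y. T\<^sup>*\<^sup>* x y \<and> stable (y::'n::finite \<Rightarrow> nat)"
proof (induction "sum x UNIV" arbitrary: x rule: less_induct)
  case less
  show ?case
  proof (cases "stable x")
    case True then show ?thesis by blast
  next
    case False
    then obtain v where "CARD('n) - 1 < x v" by (auto simp: stable_def not_le)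
    then have "CARD('n) \<le> x v" by linarith
    then have t: "asm_topple x v (\<lambda>w. if w = v then x v - CARD('n) else x w + 1)" (is "asm_topple x v ?y")
      by (simp add: asm_topple_def)
    then have "sum ?y UNIV < sum x UNIV" using asm_sum[OF t] by simp
    then obtain y where "T\<^sup>*\<^sup>* ?y y" "stable y" using less by blast
    moreover from t have "T x ?y" by blast
    ultimately have "T\<^sup>*\<^sup>* x y" by (rule_tac converse_rtranclp_into_rtranclp) auto
    then show ?thesis using \<open>stable y\<close> by blast
  qed
qed

lemma asm_unique:
  fixes x :: "'n::finite \<Rightarrow> nat"
  shows "T\<^sup>*\<^sup>* x y \<Longrightarrow> T\<^sup>*\<^sup>* x z \<Longrightarrow> stable y \<Longrightarrow> stable z \<Longrightarrow> y = z"
proof (induction "sum x UNIV" arbitrary: x y z rule: less_induct)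
  case less
  note xy = less(2) and xz = less(3) and sy = less(4) and sz = less(5)
  show ?case
  proof (cases "x = y")
    case True
    then have "z = x" using xz sy T_star_stable_eq by blast
    then show ?thesis using True by simp
  next
    case False
    from xy False obtain x1 where "T x x1" "T\<^sup>*\<^sup>* x1 y"
      by (cases rule: converse_rtranclpE) auto
    then obtain v where x1: "asm_topple x v x1" "T\<^sup>*\<^sup>* x1 y" by blast
    have "x \<noteq> z"
    proof
      assume "x = z" then have "stable x" using sz by simp
      then show False using x1 stable_no_topple by blast
    qed
    from xz this obtain x2 where "T x x2" "T\<^sup>*\<^sup>* x2 z"
      by (cases rule: converse_rtranclpE) auto
    then obtain w where x2: "asm_topple x w x2" "T\<^sup>*\<^sup>* x2 z" by blast
    have s1: "sum x1 UNIV < sum x UNIV" using asm_sum[OF x1(1)] by simp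
    have s2: "sum x2 UNIV < sum x UNIV" using asm_sum[OF x2(1)] by simp
    show ?thesis
    proof (cases "v = w")
      case True
      then have "x1 = x2" using x1(1) x2(1) asm_det by blast
      then show ?thesis using less(1)[OF s1, of y z] x1(2) x2(2) sy sz by simp
    next
      case False
      then obtain u where u: "asm_topple x1 w u" "asm_topple x2 v u" using asm_diamond x1(1) x2(1) by blast
      obtain u' where u': "T\<^sup>*\<^sup>* u u'" "stable u'" using asm_term by blast
      have "T x1 u" "T x2 u" using u by blast+
      have "T\<^sup>*\<^sup>* x1 u'" by (rule converse_rtranclp_into_rtranclp[OF \<open>T x1 u\<close> u'(1)])
      then have "y = u'" using less(1)[OF s1, of y u'] x1(2) sy u'(2) by simp
      moreover have "T\<^sup>*\<^sup>* x2 u'" by (rule converse_rtranclp_into_rtranclp[OF \<open>T x2 u\<close> u'(1)])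
      then have "z = u'" using less(1)[OF s2, of z u'] x2(2) sz u'(2) by simp
      ultimately show ?thesis by simp
    qed
  qed
qed

lemma asm_mono1: "asm_topple x v y \<Longrightarrow> asm_topple (\<lambda>w. x w + g w) v (\<lambda>w. y w + g w)"
  by (auto simp: asm_topple_def fun_eq_iff)

lemma asm_mono: "T\<^sup>*\<^sup>* x y \<Longrightarrow> T\<^sup>*\<^sup>* (\<lambda>w. x w + g w) (\<lambda>w. y w + g w)"
proof (induction rule: rtranclp_induct)
  case base then show ?case by simp
next
  case (step y z)
  then obtain v where "asm_topple y v z" by blast
  then have "T (\<lambda>w. y w + g w) (\<lambda>w. z w + g w)" using asm_mono1 by blast
  then show ?case by (rule rtranclp.rtrancl_into_rtrancl[OF step.IH])
qed



lemma burn: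
  fixes c :: "'n::finite \<Rightarrow> nat"
  assumes f: "fsc c"
  shows "T\<^sup>*\<^sup>* (\<lambda>w. c w + 1) c"
proof -
  define conf where "conf D = (\<lambda>w. if w \<in> D then c w + card D - CARD('n) else c w + 1 + card D)" for D :: "'n set"
  have main: "k \<le> CARD('n) \<Longrightarrow> \<exists>D. card D = k \<and> (\<forall>w\<in>D. CARD('n) \<le> c w + k) \<and> T\<^sup>*\<^sup>* (\<lambda>w. c w + 1) (conf D)" for k
  proof (induction k)
    case 0
    have "conf {} = (\<lambda>w. c w + 1)" by (simp add: conf_def)
    then show ?case by (intro exI[of _ "{}"]) simp
  next
    case (Suc k)
    then obtain D where D: "card D = k" "\<forall>w\<in>D. CARD('n) \<le> c w + k" "T\<^sup>*\<^sup>* (\<lambda>w. c w + 1) (conf D)"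
      by auto
    have cardA: "card (UNIV - D) = CARD('n) - k" using D(1) by (simp add: card_Diff_subset)
    then have "card (UNIV - D) > 0" using Suc.prems by simp
    then have ne: "UNIV - D \<noteq> {}" by (metis card.empty less_irrefl)
    obtain i where i: "i \<in> UNIV - D" "card (UNIV - D) \<le> c i + 1"
      using f[unfolded fsc_def, rule_format, OF ne] by (elim bexE)
    have ci: "CARD('n) \<le> c i + 1 + k" using i(2) cardA Suc.prems by linarith
    have "asm_topple (conf D) i (conf (insert i D))"
      unfolding asm_topple_def
    proof
      show "CARD('n) \<le> conf D i" using ci i D(1) by (simp add: conf_def)
      show "conf (insert i D) = (\<lambda>w. if w = i then conf D i - CARD('n) else conf D w + 1)"
      proof
        fix w
        have fin: "finite D" by simp
        have ci2: "card (insert i D) = k + 1" using D(1) i(1) fin by simp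
        have iD: "i \<notin> D" using i(1) by simp
        show "conf (insert i D) w = (if w = i then conf D i - CARD('n) else conf D w + 1)"
        proof (cases "w = i")
          case True
          then show ?thesis using iD ci2 D(1) unfolding conf_def by simp
        next
          case False
          show ?thesis
          proof (cases "w \<in> D")
            case True
            then have "CARD('n) \<le> c w + k" using D(2) by blast
            then show ?thesis using True False iD ci2 D(1) unfolding conf_def by simp
          next
            case False
            then show ?thesis using \<open>w \<noteq> i\<close> iD ci2 D(1) unfolding conf_def by simp
          qed
        qed
      qed
    qed
    then have "T (conf D) (conf (insert i D))" by blast
    then have "T\<^sup>*\<^sup>* (\<lambda>w. c w + 1) (conf (insert i D))" by (rule rtranclp.rtrancl_into_rtrancl[OF D(3)])
    moreover have "card (insert i D) = Suc k" using D(1) i(1) by simp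
    moreover have "\<forall>w\<in>insert i D. CARD('n) \<le> c w + Suc k" using D(2) ci by auto
    ultimately show ?case by blast
  qed
  obtain D where D: "card D = CARD('n)" "T\<^sup>*\<^sup>* (\<lambda>w. c w + 1) (conf D)" using main[of "CARD('n)"] by auto
  have "D = UNIV" using D(1) by (simp add: card_eq_UNIV_imp_eq_UNIV)
  then have "conf D = c" using D(1) by (simp add: conf_def)
  then show ?thesis using D(2) by simp
qed

lemma burn_iter:
  fixes c :: "'n::finite \<Rightarrow> nat"
  assumes f: "fsc c"
  shows "T\<^sup>*\<^sup>* (\<lambda>w. c w + k) c"
proof (induction k)
  case 0 then show ?case by simp
next
  case (Suc k)
  have "T\<^sup>*\<^sup>* (\<lambda>w. (c w + 1) + k) (\<lambda>w. c w + k)" using asm_mono[OF burn[OF f], of "\<lambda>_. k"] by simp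
  then have "T\<^sup>*\<^sup>* (\<lambda>w. c w + Suc k) (\<lambda>w. c w + k)" by (simp add: add.commute add.left_commute)
  then show ?case using Suc.IH by (rule rtranclp_trans)
qed

lemma seq_add:
  fixes x :: "'n::finite \<Rightarrow> nat"
  assumes mu: "\<forall>i. \<mu> i > 0" and sx: "stable x"
  shows "\<exists>y. stable y \<and> (chain_step \<mu> asm_topple)\<^sup>*\<^sup>* x y \<and> T\<^sup>*\<^sup>* (\<lambda>w. x w + g w) y"
proof (induction "sum g UNIV" arbitrary: g)
  case 0
  then have "g = (\<lambda>_. 0)" by (simp add: fun_eq_iff)
  then show ?case using sx by (intro exI[of _ x]) simp
next
  case (Suc k)
  then obtain i where gi: "g i > 0" by (metis gr0I sum.neutral nat.simps(3))
  define g' where "g' = g(i := g i - 1)"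
  have "sum g UNIV = g i + sum g (UNIV - {i})" by (rule sum.remove) auto
  moreover have "sum g' UNIV = g' i + sum g' (UNIV - {i})" by (rule sum.remove) auto
  moreover have "sum g' (UNIV - {i}) = sum g (UNIV - {i})" unfolding g'_def by (rule sum.cong) auto
  ultimately have "k = sum g' UNIV" using Suc.hyps gi by (simp add: g'_def)
  then obtain y' where y': "stable y'" "(chain_step \<mu> asm_topple)\<^sup>*\<^sup>* x y'" "T\<^sup>*\<^sup>* (\<lambda>w. x w + g' w) y'"
    using Suc.hyps(1) by blast
  obtain y where y: "T\<^sup>*\<^sup>* (y'(i := y' i + 1)) y" "stable y" using asm_term by blast
  have "chain_step \<mu> asm_topple y' y"
    unfolding chain_step_def stabilises_to_def using y y' mu by blast
  then have c: "(chain_step \<mu> asm_topple)\<^sup>*\<^sup>* x y" by (rule rtranclp.rtrancl_into_rtrancl[OF y'(2)])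
  have "T\<^sup>*\<^sup>* (\<lambda>w. (x w + g' w) + (if w = i then 1 else 0)) (\<lambda>w. y' w + (if w = i then 1 else 0))"
    by (rule asm_mono[OF y'(3)])
  moreover have "(\<lambda>w. (x w + g' w) + (if w = i then 1 else 0)) = (\<lambda>w. x w + g w)"
    using gi by (auto simp: g'_def fun_eq_iff)
  moreover have "(\<lambda>w. y' w + (if w = i then 1 else 0)) = y'(i := y' i + 1)" by (auto simp: fun_eq_iff)
  ultimately have "T\<^sup>*\<^sup>* (\<lambda>w. x w + g w) (y'(i := y' i + 1))" by simp
  then have "T\<^sup>*\<^sup>* (\<lambda>w. x w + g w) y" using y(1) by (rule rtranclp_trans)
  then show ?case using c y(2) by blast
qed

lemma fsc_reach:
  fixes c :: "'n::finite \<Rightarrow> nat"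
  assumes mu: "\<forall>i. \<mu> i > 0" and f: "fsc c" and s: "stable c"
  shows "(chain_step \<mu> asm_topple)\<^sup>*\<^sup>* cmax c"
proof -
  obtain y where y: "stable y" "(chain_step \<mu> asm_topple)\<^sup>*\<^sup>* cmax y" "T\<^sup>*\<^sup>* (\<lambda>w. cmax w + c w) y"
    using seq_add[OF mu stable_cmax] by blast
  have "CARD('n) \<ge> 1" by (simp add: Suc_leI)
  then have "(\<lambda>w. cmax w + c w) = (\<lambda>w. c w + (CARD('n) - 1))" unfolding cmax_def by (intro ext) linarith
  then have "T\<^sup>*\<^sup>* (\<lambda>w. cmax w + c w) c" by (subst \<open>_ = _\<close>) (rule burn_iter[OF f])
  then have "y = c" using asm_unique y s by blast
  then show ?thesis using y by simp
qed



definition subc :: "('n::finite \<Rightarrow> nat) \<Rightarrow> bool" where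
  "subc c \<longleftrightarrow> (\<forall>A. int (card A) * (int (card A) - 1) \<le> 2 * int (sum c A))"

lemma subc_mono:
  assumes "subc c" "\<And>w. c w \<le> d w" shows "subc d"
  unfolding subc_def
proof
  fix A :: "'a set"
  have "sum c A \<le> sum d A" by (rule sum_mono) (use assms in auto)
  moreover have "int (card A) * (int (card A) - 1) \<le> 2 * int (sum c A)" using assms(1) unfolding subc_def by blast
  ultimately show "int (card A) * (int (card A) - 1) \<le> 2 * int (sum d A)" by linarith
qed

lemma card_nbrs: "card (nbrs (v::'n::finite)) = CARD('n)"
proof -
  have "card (Some ` (UNIV - {v})) = CARD('n) - 1"
    by (simp add: card_image card_Diff_singleton)
  moreover have "CARD('n) \<ge> 1" by (simp add: Suc_leI)
  ultimately show ?thesis unfolding nbrs_def by (simp add: card_insert_if)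
qed

lemma ssm_subc:
  fixes x :: "'n::finite \<Rightarrow> nat"
  assumes sx: "subc x" and t: "ssm_topple p x v y"
  shows "subc y"
proof -
  obtain S where S: "S \<subseteq> nbrs v" and xv: "CARD('n) \<le> x v"
    and y: "y = (\<lambda>w. if w = v then x v - card S else if Some w \<in> S then x w + 1 else x w)"
    using t unfolding ssm_topple_def by blast
  have cS: "card S \<le> CARD('n)" using card_mono[OF _ S] card_nbrs[of v] by simp
  show ?thesis unfolding subc_def
  proof
    fix A :: "'n set"
    show "int (card A) * (int (card A) - 1) \<le> 2 * int (sum y A)"
    proof (cases "v \<in> A")
      case False
      have "sum x A \<le> sum y A" by (rule sum_mono) (use False in \<open>auto simp: y\<close>)
      moreover have "int (card A) * (int (card A) - 1) \<le> 2 * int (sum x A)" using sx unfolding subc_def by blast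
      ultimately show ?thesis by linarith
    next
      case True
      let ?B = "A - {v}"
      let ?K = "{w \<in> ?B. Some w \<in> S}"
      have a: "card A = card ?B + 1" using card_Suc_Diff1[OF finite True] by simp
      have "sum y A = y v + sum y ?B" by (rule sum.remove) (use True in auto)
      moreover have "sum y ?B = sum (\<lambda>w. x w + (if Some w \<in> S then 1 else 0)) ?B"
        by (rule sum.cong) (auto simp: y)
      moreover have "\<dots> = sum x ?B + card ?K"
        by (simp add: sum.distrib sum.If_cases[of "?B"] Int_def)
      ultimately have sy: "sum y A = x v - card S + sum x ?B + card ?K" by (simp add: y)
      have sB: "int (card ?B) * (int (card ?B) - 1) \<le> 2 * int (sum x ?B)" using sx unfolding subc_def by blast
      have "S \<subseteq> Some ` ?K \<union> (nbrs v - Some ` ?B)" using S by auto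
      then have "card S \<le> card (Some ` ?K \<union> (nbrs v - Some ` ?B))" by (intro card_mono) auto
      also have "\<dots> \<le> card (Some ` ?K) + card (nbrs v - Some ` ?B)" by (rule card_Un_le)
      also have "card (Some ` ?K) = card ?K" by (simp add: card_image)
      also have "card (nbrs v - Some ` ?B) = CARD('n) - card ?B"
      proof -
        have "Some ` ?B \<subseteq> nbrs v" by (auto simp: nbrs_def)
        then have "card (nbrs v - Some ` ?B) = card (nbrs v) - card (Some ` ?B)"
          by (simp add: card_Diff_subset)
        then show ?thesis by (simp add: card_nbrs card_image)
      qed
      finally have cS2: "card S \<le> card ?K + (CARD('n) - card ?B)" .
      have "card ?B \<le> card (UNIV - {v})" by (rule card_mono) auto
      moreover have "card (UNIV - {v}) = CARD('n) - 1" by (simp add: card_Diff_singleton)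
      moreover have "CARD('n) \<ge> 1" by (simp add: Suc_leI)
      ultimately have "card ?B < CARD('n)" by linarith
      have i1: "int (sum y A) = int (x v) - int (card S) + int (sum x ?B) + int (card ?K)"
        using sy cS xv by simp
      have i2: "int (card S) \<le> int (card ?K) + int CARD('n) - int (card ?B)"
        using cS2 \<open>card ?B < CARD('n)\<close> by simp
      have i3: "int CARD('n) \<le> int (x v)" using xv by simp
      have "int (card A) * (int (card A) - 1) = int (card ?B) * (int (card ?B) - 1) + 2 * int (card ?B)"
        using a by (simp add: algebra_simps)
      then show ?thesis using i1 i2 i3 sB by linarith
    qed
  qed
qed

lemma subc_cmax: "subc (cmax :: 'n::finite \<Rightarrow> nat)"
  unfolding subc_def
proof
  fix A :: "'n set"
  have h: "card A \<le> CARD('n)" by (simp add: card_mono)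
  have n1: "CARD('n) \<ge> 1" by (simp add: Suc_leI)
  have "sum cmax A = card A * (CARD('n) - 1)" by (simp add: cmax_def)
  then have e: "int (sum cmax A) = int (card A) * (int CARD('n) - 1)" using n1 by (simp add: of_nat_diff)
  have h1: "int (card A) * (int (card A) - 1) \<le> int (card A) * (int CARD('n) - 1)"
    using h by (intro mult_left_mono) auto
  have h0: "0 \<le> int (card A) * (int CARD('n) - 1)" using n1 by simp
  show "int (card A) * (int (card A) - 1) \<le> 2 * int (sum cmax A)" using e h1 h0 by linarith
qed

lemma sr_subc:
  fixes c :: "'n::finite \<Rightarrow> nat"
  assumes "(chain_step \<mu> (ssm_topple p))\<^sup>*\<^sup>* cmax c"
  shows "subc c"
  using assms
proof (induction rule: rtranclp_induct)
  case base then show ?case by (rule subc_cmax)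
next
  case (step y z)
  then obtain i where i: "(\<lambda>x y. \<exists>v. ssm_topple p x v y)\<^sup>*\<^sup>* (y(i := y i + 1)) z"
    unfolding chain_step_def stabilises_to_def by blast
  have "subc (y(i := y i + 1))" by (rule subc_mono[OF step.IH]) auto
  with i show ?case
    by (induction rule: rtranclp_induct) (auto intro: ssm_subc)
qed

lemma asm_ssm:
  fixes x :: "'n::finite \<Rightarrow> nat"
  assumes "0 < p" "p < 1" "asm_topple x v y" shows "ssm_topple p x v y"
proof -
  have "y = (\<lambda>w. if w = v then x v - CARD('n) else x w + 1)" using assms(3) by (simp add: asm_topple_def)
  then have "y = (\<lambda>w. if w = v then x v - card (nbrs v) else if Some w \<in> nbrs v then x w + 1 else x w)"
    by (simp only: card_nbrs) (auto simp: nbrs_def fun_eq_iff)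
  moreover have "p ^ card (nbrs v) * (1 - p) ^ (CARD('n) - card (nbrs v)) > 0"
    using assms(1) by (simp add: card_nbrs)
  ultimately show ?thesis using assms(3) unfolding ssm_topple_def asm_topple_def by blast
qed

lemma dr_sr_step:
  fixes x :: "'n::finite \<Rightarrow> nat"
  assumes "0 < p" "p < 1" "chain_step \<mu> asm_topple x y" shows "chain_step \<mu> (ssm_topple p) x y"
proof -
  have m: "(\<lambda>x y. \<exists>v. asm_topple x v y) a b \<Longrightarrow> (\<lambda>x y. \<exists>v. ssm_topple p x v y) a b" for a b :: "'n \<Rightarrow> nat"
    using asm_ssm[OF assms(1,2)] by blast
  have le: "(\<lambda>(x::'n\<Rightarrow>nat) y. \<exists>v. asm_topple x v y)\<^sup>*\<^sup>* \<le> (\<lambda>x y. \<exists>v. ssm_topple p x v y)\<^sup>*\<^sup>*"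
    by (rule rtranclp_mono, rule predicate2I) (use asm_ssm[OF assms(1,2)] in blast)
  from assms(3) obtain i where "stable x" "\<mu> i > 0" "(\<lambda>x y. \<exists>v. asm_topple x v y)\<^sup>*\<^sup>* (x(i := x i + 1)) y" "stable y"
    unfolding chain_step_def stabilises_to_def by blast
  moreover have "(\<lambda>x y. \<exists>v. ssm_topple p x v y)\<^sup>*\<^sup>* (x(i := x i + 1)) y" using le calculation(3) by (simp add: le_fun_def)
  ultimately show ?thesis unfolding chain_step_def stabilises_to_def by blast
qed

lemma dr_sr:
  fixes x :: "'n::finite \<Rightarrow> nat"
  assumes "0 < p" "p < 1" "(chain_step \<mu> asm_topple)\<^sup>*\<^sup>* x y" shows "(chain_step \<mu> (ssm_topple p))\<^sup>*\<^sup>* x y"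
  using assms(3) by (induction rule: rtranclp_induct) (auto intro: rtranclp.rtrancl_into_rtrancl dr_sr_step[OF assms(1,2)])



lemma arith_key:
  fixes k w g \<mu> \<alpha> \<beta> \<gamma> t :: int
  assumes k: "k \<ge> 1" and w: "w \<ge> 0" and g: "g \<ge> 0" and t: "t = w + g"
    and a: "k * \<mu> \<le> \<alpha>" and b: "w * (w - 1) \<le> 2 * \<beta>" and c: "\<gamma> \<le> g * \<mu>"
    and B: "(k + t + 1) * (k + t) \<le> 2 * (\<alpha> + \<beta> + \<gamma> + t)"
  shows "(k + w) * (k + w - 1) + 2 * k \<le> 2 * (\<alpha> + \<beta>)"
proof (cases "2 * w + k + 1 \<le> 2 * \<mu>")
  case True
  have m: "k * (2 * w + k + 1) \<le> k * (2 * \<mu>)" using True k by (intro mult_left_mono) auto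
  have "(k + w) * (k + w - 1) + 2 * k = k * (2 * w + k + 1) + w * (w - 1)" by (simp add: algebra_simps)
  also have "\<dots> \<le> k * (2 * \<mu>) + 2 * \<beta>" using m b by (rule add_mono)
  also have "\<dots> = 2 * (k * \<mu>) + 2 * \<beta>" by simp
  also have "\<dots> \<le> 2 * \<alpha> + 2 * \<beta>" using a by simp
  finally show ?thesis by simp
next
  case False
  have m: "g * (2 * \<mu>) \<le> g * (2 * w + k)" using False g by (intro mult_left_mono) auto
  have p: "g * (k + g - 1) \<ge> 0" using g k by simp
  have "(k + w) * (k + w - 1) + 2 * k \<le> (k + w) * (k + w - 1) + 2 * k + g * (k + g - 1)" using p by simp
  also have "\<dots> = (k + t + 1) * (k + t) - 2 * t - g * (2 * w + k)"
    using t by (simp add: algebra_simps)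
  also have "\<dots> \<le> (k + t + 1) * (k + t) - 2 * t - g * (2 * \<mu>)" using m by simp
  also have "\<dots> = (k + t + 1) * (k + t) - 2 * t - 2 * (g * \<mu>)" by simp
  also have "\<dots> \<le> 2 * (\<alpha> + \<beta> + \<gamma> + t) - 2 * t - 2 * \<gamma>" using B c by simp
  finally show ?thesis by (simp add: algebra_simps)
qed

lemma arith_key2:
  fixes h s k n X :: int
  assumes "h \<ge> 0" "s \<ge> 0" "h + s \<le> n - 1" "s * (s - 1) + 2 * k \<le> X"
  shows "(h + s) * (h + s - 1) + 2 * k \<le> 2 * (h * (n - 1)) + X"
proof -
  have m: "h * (2 * s + h - 1) \<le> h * (2 * (n - 1))" using assms by (intro mult_left_mono) auto
  have "(h + s) * (h + s - 1) + 2 * k = (s * (s - 1) + 2 * k) + h * (2 * s + h - 1)" by (simp add: algebra_simps)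
  also have "\<dots> \<le> X + h * (2 * (n - 1))" using assms(4) m by (rule add_mono)
  also have "\<dots> = 2 * (h * (n - 1)) + X" by simp
  finally show ?thesis .
qed



lemma top_subset:
  fixes f :: "'a \<Rightarrow> nat"
  assumes fin: "finite X" and kX: "k \<le> card X"
  shows "\<exists>Z \<subseteq> X. card Z = k \<and> (\<forall>z\<in>Z. \<forall>w\<in>X - Z. f w \<le> f z)"
  using kX
proof (induction k)
  case 0 show ?case by (intro exI[of _ "{}"]) auto
next
  case (Suc k)
  then obtain Z where Z: "Z \<subseteq> X" "card Z = k" "\<forall>z\<in>Z. \<forall>w\<in>X - Z. f w \<le> f z" by auto
  have finD: "finite (X - Z)" using fin by simp
  have "card (X - Z) = card X - k" using Z fin by (simp add: card_Diff_subset finite_subset)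
  then have "card (X - Z) > 0" using Suc.prems by simp
  then have ne: "X - Z \<noteq> {}" by (metis card.empty less_irrefl)
  have "Max (f ` (X - Z)) \<in> f ` (X - Z)" using finD ne by (intro Max_in) auto
  then obtain m where m1: "m \<in> X - Z" "f m = Max (f ` (X - Z))" by auto
  have m2: "\<forall>w\<in>X - Z. f w \<le> f m" using finD m1(2) by auto
  have "insert m Z \<subseteq> X" using m1 Z by auto
  moreover have "card (insert m Z) = Suc k" using m1 Z finite_subset[OF Z(1) fin] by simp
  moreover have "\<forall>z\<in>insert m Z. \<forall>w\<in>X - insert m Z. f w \<le> f z" using m1 m2 Z by auto
  ultimately show ?case by blast
qed

lemma subcD: "subc c \<Longrightarrow> int (card A) * (int (card A) - 1) \<le> 2 * int (sum c A)"
  unfolding subc_def by blast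

lemma key_claim:
  fixes c :: "'n::finite \<Rightarrow> nat"
  assumes sub: "subc c" and st: "stable c"
    and R: "R = {w. c w < CARD('n) - 1}" and vR: "v \<in> R" and vmax: "\<forall>w\<in>R. c w \<le> c v"
    and Z: "Z \<subseteq> R - {v}" and cZ: "card Z = card R - 1 - c v"
    and top: "\<forall>z\<in>Z. \<forall>w\<in>(R - {v}) - Z. c w \<le> c z"
    and vA: "v \<notin> A"
  shows "int (card A) * (int (card A) - 1) + 2 * int (card (A \<inter> Z)) \<le> 2 * int (sum c A)"
proof (cases "A \<inter> Z = {}")
  case True then show ?thesis using subcD[OF sub, of A] by simp
next
  case False
  define W where "W = R - {v} - Z"
  define t where "t = c v"
  define AZ where "AZ = A \<inter> Z"
  define AW where "AW = A \<inter> W"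
  define AM where "AM = A - R"
  define n where "n = CARD('n)"
  have n1: "n \<ge> 1" unfolding n_def by (simp add: Suc_leI)
  have ZnE: "Z \<noteq> {}" using False by auto
  have finZ: "finite Z" by simp
  have cRv: "card (R - {v}) = card R - 1" using vR by (simp add: card_Diff_singleton)
  have qpos: "card Z \<ge> 1" using ZnE finZ by (simp add: Suc_le_eq card_gt_0_iff)
  have cW: "card W = t"
  proof -
    have "card W = card (R - {v}) - card Z" unfolding W_def using Z by (simp add: card_Diff_subset)
    then show ?thesis using cRv cZ qpos unfolding t_def by linarith
  qed
  define \<mu> where "\<mu> = Min (c ` Z)"
  have \<mu>Z: "\<forall>z\<in>Z. \<mu> \<le> c z" unfolding \<mu>_def using finZ by simp
  have "\<mu> \<in> c ` Z" unfolding \<mu>_def using finZ ZnE by (intro Min_in) auto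
  then obtain z0 where z0: "z0 \<in> Z" "c z0 = \<mu>" by auto
  have \<mu>W: "\<forall>x\<in>W. c x \<le> \<mu>" using top z0 unfolding W_def by auto
  have AR: "A \<inter> R \<subseteq> Z \<union> W" using vA unfolding W_def by auto
  have Adec: "A = AM \<union> (AZ \<union> AW)" unfolding AM_def AZ_def AW_def using AR Z by auto
  have disj1: "AM \<inter> (AZ \<union> AW) = {}" unfolding AM_def AZ_def AW_def W_def using Z by auto
  have disj2: "AZ \<inter> AW = {}" unfolding AZ_def AW_def W_def by auto
  have sumA: "sum c A = sum c AM + (sum c AZ + sum c AW)"
    by (subst Adec, subst sum.union_disjoint) (use disj1 disj2 in \<open>auto intro: sum.union_disjoint\<close>)
  have cardA: "card A = card AM + (card AZ + card AW)"
    by (subst Adec, subst card_Un_disjoint) (use disj1 disj2 in \<open>auto intro: card_Un_disjoint\<close>)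
  have sAM: "sum c AM = card AM * (n - 1)"
  proof -
    have "\<forall>w\<in>AM. c w = n - 1" using st unfolding AM_def R stable_def n_def by (auto simp: not_less intro: antisym)
    then show ?thesis by simp
  qed
  have kpos: "card AZ \<ge> 1" using False finZ unfolding AZ_def by (simp add: Suc_le_eq card_gt_0_iff)
  have alpha: "int (card AZ) * int \<mu> \<le> int (sum c AZ)"
  proof -
    have "of_nat (card AZ) * \<mu> \<le> sum c AZ" by (rule sum_bounded_below) (use \<mu>Z in \<open>auto simp: AZ_def\<close>)
    then have "int (card AZ * \<mu>) \<le> int (sum c AZ)" by (simp only: of_nat_le_iff of_nat_id)
    then show ?thesis by (simp only: of_nat_mult)
  qed
  have beta: "int (card AW) * (int (card AW) - 1) \<le> 2 * int (sum c AW)" by (rule subcD[OF sub])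
  have AWW: "AW \<subseteq> W" unfolding AW_def by auto
  have cWA: "card (W - AW) = t - card AW" using AWW cW by (simp add: card_Diff_subset finite_subset)
  have gamma: "int (sum c (W - AW)) \<le> int (t - card AW) * int \<mu>"
  proof -
    have "sum c (W - AW) \<le> of_nat (card (W - AW)) * \<mu>" by (rule sum_bounded_above) (use \<mu>W in auto)
    then have "int (sum c (W - AW)) \<le> int ((t - card AW) * \<mu>)" unfolding cWA by (simp only: of_nat_le_iff of_nat_id)
    then show ?thesis by (simp only: of_nat_mult)
  qed
  have sW: "sum c W = sum c AW + sum c (W - AW)" using AWW by (metis finite sum.subset_diff add.commute)
  define B where "B = insert v (AZ \<union> W)"
  have vB: "v \<notin> AZ \<union> W" unfolding AZ_def W_def using Z by auto
  have dZW: "AZ \<inter> W = {}" unfolding AZ_def W_def by auto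
  have sB: "sum c B = t + (sum c AZ + sum c W)"
    unfolding B_def using vB dZW by (simp add: sum.union_disjoint t_def)
  have cB: "card B = card AZ + t + 1"
    unfolding B_def using vB dZW cW by (simp add: card_Un_disjoint)
  have Bineq: "int (card B) * (int (card B) - 1) \<le> 2 * int (sum c B)" by (rule subcD[OF sub])
  have tw: "card AW \<le> t" using AWW cW by (metis card_mono finite)
  define k where "k = int (card AZ)"
  define w where "w = int (card AW)"
  define g where "g = int t - int (card AW)"
  have key: "(k + w) * (k + w - 1) + 2 * k \<le> 2 * (int (sum c AZ) + int (sum c AW))"
  proof (rule arith_key[where g = g and t = "int t" and \<mu> = "int \<mu>" and \<gamma> = "int (sum c (W - AW))"])
    show "1 \<le> k" using kpos unfolding k_def by simp
    show "0 \<le> w" unfolding w_def by simp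
    show "0 \<le> g" using tw unfolding g_def by simp
    show "int t = w + g" unfolding w_def g_def by simp
    show "k * int \<mu> \<le> int (sum c AZ)" using alpha unfolding k_def .
    show "w * (w - 1) \<le> 2 * int (sum c AW)" using beta unfolding w_def .
    show "int (sum c (W - AW)) \<le> g * int \<mu>" using gamma tw unfolding g_def by (simp add: of_nat_diff)
    show "(k + int t + 1) * (k + int t) \<le> 2 * (int (sum c AZ) + int (sum c AW) + int (sum c (W - AW)) + int t)"
      using Bineq cB sB sW unfolding k_def by (simp add: algebra_simps)
  qed
  have cAv: "card A \<le> n - 1"
  proof -
    have "card A \<le> card (UNIV - {v})" using vA by (intro card_mono) auto
    then show ?thesis unfolding n_def by (simp add: card_Diff_singleton)
  qed
  have "(int (card AM) + (k + w)) * (int (card AM) + (k + w) - 1) + 2 * k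
      \<le> 2 * (int (card AM) * (int n - 1)) + 2 * (int (sum c AZ) + int (sum c AW))"
    by (rule arith_key2) (use cAv cardA n1 key in \<open>auto simp: k_def w_def\<close>)
  moreover have "int (sum c A) = int (card AM) * (int n - 1) + (int (sum c AZ) + int (sum c AW))"
    using sumA sAM n1 by (simp add: of_nat_diff)
  moreover have "int (card A) = int (card AM) + (k + w)" using cardA unfolding k_def w_def by simp
  moreover have "card (A \<inter> Z) = card AZ" unfolding AZ_def ..
  ultimately show ?thesis unfolding k_def by (simp add: algebra_simps)
qed



lemma ssm_single:
  fixes x :: "'n::finite \<Rightarrow> nat"
  assumes p: "0 < p" "p < 1" and S: "S \<subseteq> nbrs v" and xv: "CARD('n) \<le> x v"
  shows "ssm_topple p x v (\<lambda>w. if w = v then x v - card S else if Some w \<in> S then x w + 1 else x w)"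
proof -
  have "p ^ card S * (1 - p) ^ (CARD('n) - card S) > 0" using p by simp
  then show ?thesis unfolding ssm_topple_def using S xv by blast
qed

lemma ssm_single':
  fixes x :: "'n::finite \<Rightarrow> nat"
  assumes p: "0 < p" "p < 1" and S: "S \<subseteq> nbrs v" and xv: "CARD('n) \<le> x v"
    and e: "e = (\<lambda>w. if w = v then x v - card S else if Some w \<in> S then x w + 1 else x w)"
  shows "ssm_topple p x v e"
  unfolding e by (rule ssm_single[where p=p and S=S and v=v and x=x, OF p S xv])

lemma drain:
  fixes x :: "'n::finite \<Rightarrow> nat"
  assumes p: "0 < p" "p < 1" and fin: "finite Y"
  shows "(\<forall>y\<in>Y. x y = CARD('n)) \<Longrightarrow>
    (\<lambda>x y. \<exists>v. ssm_topple p x v y)\<^sup>*\<^sup>* x (\<lambda>w. if w \<in> Y then CARD('n) - 1 else x w)"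
  using fin
proof (induction Y rule: finite_induct)
  case empty then show ?case by simp
next
  case (insert y Y)
  let ?x' = "\<lambda>w. if w \<in> Y then CARD('n) - 1 else x w"
  have IH: "(\<lambda>x y. \<exists>v. ssm_topple p x v y)\<^sup>*\<^sup>* x ?x'" using insert by simp
  have xy: "?x' y = CARD('n)" using insert by simp
  have S: "{None} \<subseteq> nbrs y" by (simp add: nbrs_def)
  have "ssm_topple p ?x' y (\<lambda>w. if w \<in> insert y Y then CARD('n) - 1 else x w)"
    by (rule ssm_single'[OF p S]) (use xy insert.hyps in \<open>auto simp: fun_eq_iff\<close>)
  then have "(\<lambda>x y. \<exists>v. ssm_topple p x v y) ?x' (\<lambda>w. if w \<in> insert y Y then CARD('n) - 1 else x w)"
    by auto
  then show ?case by (rule rtranclp.rtrancl_into_rtrancl[OF IH])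
qed

lemma predecessor:
  fixes c :: "'n::finite \<Rightarrow> nat"
  assumes p: "0 < p" "p < 1" and mu: "\<forall>i. \<mu> i > 0" and sub: "subc c" and st: "stable c"
    and ne: "{w. c w < CARD('n) - 1} \<noteq> {}"
  shows "\<exists>d. stable d \<and> subc d \<and> card {w. d w < CARD('n) - 1} < card {w. c w < CARD('n) - 1}
           \<and> chain_step \<mu> (ssm_topple p) d c"
proof -
  define n where "n = CARD('n)"
  define R where "R = {w. c w < n - 1}"
  have n1: "n \<ge> 1" unfolding n_def by (simp add: Suc_leI)
  have finR: "finite R" by simp
  have RnE: "R \<noteq> {}" using ne unfolding R_def n_def .
  have "Max (c ` R) \<in> c ` R" using finR RnE by (intro Max_in) auto
  then obtain v where v: "v \<in> R" "c v = Max (c ` R)" by auto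
  have vmax: "\<forall>w\<in>R. c w \<le> c v" using v finR by auto
  define t where "t = c v"
  have tn: "t < n - 1" using v unfolding R_def t_def by simp
  define q where "q = card R - 1 - t"
  have cRv: "card (R - {v}) = card R - 1" using v by (simp add: card_Diff_singleton)
  have "q \<le> card (R - {v})" using cRv unfolding q_def by simp
  then obtain Z where Z: "Z \<subseteq> R - {v}" "card Z = q" "\<forall>z\<in>Z. \<forall>w\<in>(R - {v}) - Z. c w \<le> c z"
    using top_subset[of "R - {v}" q c] by auto
  define M where "M = UNIV - R"
  have cR: "card R \<le> n" unfolding n_def by (simp add: card_mono)
  have cM: "card M = n - card R" unfolding M_def n_def by (simp add: card_Diff_subset)
  have cR1: "card R \<ge> 1" using RnE finR by (simp add: Suc_le_eq card_gt_0_iff)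
  have qle: "q \<le> n - 1 - t" unfolding q_def using cR by linarith
  have Yle: "n - 1 - t - q \<le> card M" unfolding cM q_def using cR cR1 tn by linarith
  obtain Y where Y: "Y \<subseteq> M" "card Y = n - 1 - t - q"
    using obtain_subset_with_card_n[OF Yle] by metis
  have claim: "\<And>A. v \<notin> A \<Longrightarrow> int (card A) * (int (card A) - 1) + 2 * int (card (A \<inter> Z)) \<le> 2 * int (sum c A)"
    by (rule key_claim[OF sub st _ v(1) vmax Z(1) _ Z(3)]) (auto simp: R_def n_def Z(2) q_def t_def)
  have czpos: "\<forall>z\<in>Z. c z \<ge> 1"
  proof
    fix z assume zZ: "z \<in> Z"
    then have "v \<notin> {z}" using Z by auto
    from claim[OF this] have "2 \<le> 2 * int (c z)" using zZ by simp
    then show "c z \<ge> 1" by simp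
  qed
  have vZ: "v \<notin> Z" using Z by auto
  have vY: "v \<notin> Y" using Y v unfolding M_def by auto
  have YZ: "Y \<inter> Z = {}" using Y Z unfolding M_def by auto
  have cM_val: "\<forall>w\<in>M. c w = n - 1" using st unfolding M_def R_def stable_def n_def by (auto simp: not_less intro: antisym)
  define d where "d = (\<lambda>w. if w = v then n - 1 else if w \<in> Z then c w - 1 else c w)"
  have std: "stable d" unfolding stable_def
  proof
    fix i
    have "c i \<le> n - 1" using st unfolding stable_def n_def by blast
    then show "d i \<le> CARD('n) - 1" unfolding d_def n_def by auto
  qed
  have sum_eq: "sum d A + card (A \<inter> Z) + (if v \<in> A then t else 0)
      = sum c A + (if v \<in> A then n - 1 else 0)" for A
  proof -
    have "sum d A + card (A \<inter> Z) = sum (\<lambda>w. d w + (if w \<in> Z then 1 else 0)) A"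
      by (simp add: sum.distrib sum.If_cases Int_commute)
    also have "\<dots> = sum (\<lambda>w. if w = v then n - 1 else c w) A"
      by (rule sum.cong) (use czpos vZ in \<open>auto simp: d_def\<close>)
    finally have e1: "sum d A + card (A \<inter> Z) = sum (\<lambda>w. if w = v then n - 1 else c w) A" .
    show ?thesis
    proof (cases "v \<in> A")
      case True
      have "sum (\<lambda>w. if w = v then n - 1 else c w) A = (n - 1) + sum (\<lambda>w. if w = v then n - 1 else c w) (A - {v})"
        using sum.remove[of A v "\<lambda>w. if w = v then n - 1 else c w"] True by simp
      moreover have "sum (\<lambda>w. if w = v then n - 1 else c w) (A - {v}) = sum c (A - {v})" by (rule sum.cong) auto
      moreover have "sum c A = c v + sum c (A - {v})" by (rule sum.remove) (use True in auto)
      ultimately show ?thesis using e1 True unfolding t_def by simp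
    next
      case False
      have "sum (\<lambda>w. if w = v then n - 1 else c w) A = sum c A" by (rule sum.cong) (use False in auto)
      then show ?thesis using e1 False by simp
    qed
  qed
  have subd: "subc d" unfolding subc_def
  proof
    fix A :: "'n set"
    show "int (card A) * (int (card A) - 1) \<le> 2 * int (sum d A)"
    proof (cases "v \<in> A")
      case True
      have "card (A \<inter> Z) \<le> card Z" by (rule card_mono) auto
      then have "card (A \<inter> Z) + t \<le> n - 1" using Z(2) qle tn by linarith
      then have "sum c A \<le> sum d A" using sum_eq[of A] True by simp
      then have "int (sum c A) \<le> int (sum d A)" by (simp only: of_nat_le_iff)
      then show ?thesis using subcD[OF sub, of A] by linarith
    next
      case False
      then have "sum c A = sum d A + card (A \<inter> Z)" using sum_eq[of A] by simp
      then have "int (sum c A) = int (sum d A) + int (card (A \<inter> Z))" by (simp only: of_nat_add)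
      then show ?thesis using claim[OF False] by linarith
    qed
  qed
  have cardd: "card {w. d w < n - 1} < card R"
  proof -
    have "{w. d w < n - 1} \<subseteq> R - {v}" unfolding d_def R_def using Z unfolding R_def by auto
    then have "card {w. d w < n - 1} \<le> card (R - {v})" by (rule card_mono[rotated]) simp
    then show ?thesis using cRv cR1 by linarith
  qed
  define S where "S = insert None (Some ` (Y \<union> Z))"
  have SN: "S \<subseteq> nbrs v" unfolding S_def nbrs_def using vY vZ by auto
  have cS: "card S = n - t"
  proof -
    have "card (Some ` (Y \<union> Z)) = card Y + card Z"
      using YZ by (simp add: card_image card_Un_disjoint finite_subset)
    then have "card S = Suc (card Y + card Z)" unfolding S_def by (simp add: image_iff)
    then show ?thesis using Y(2) Z(2) qle tn by linarith
  qed
  define x0 where "x0 = d(v := d v + 1)"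
  have x0v: "x0 v = n" unfolding x0_def d_def using n1 by simp
  define e where "e = (\<lambda>w. if w = v then x0 v - card S else if Some w \<in> S then x0 w + 1 else x0 w)"
  have t1: "ssm_topple p x0 v e" unfolding e_def by (rule ssm_single[OF p SN]) (simp add: x0v n_def)
  have eY: "\<forall>y\<in>Y. e y = CARD('n)"
  proof
    fix y assume yY: "y \<in> Y"
    then have "y \<noteq> v" "y \<notin> Z" "Some y \<in> S" "c y = n - 1" using vY YZ cM_val Y(1) unfolding S_def by auto
    then show "e y = CARD('n)" unfolding e_def x0_def d_def n_def using n1 n_def by simp
  qed
  have t2: "(\<lambda>x y. \<exists>v. ssm_topple p x v y)\<^sup>*\<^sup>* e (\<lambda>w. if w \<in> Y then CARD('n) - 1 else e w)"
    by (rule drain[OF p _ eY]) simp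
  have fin_eq: "(\<lambda>w. if w \<in> Y then CARD('n) - 1 else e w) = c"
  proof
    fix w
    show "(if w \<in> Y then CARD('n) - 1 else e w) = c w"
    proof (cases "w \<in> Y")
      case True then show ?thesis using cM_val Y(1) unfolding n_def by auto
    next
      case nY: False
      show ?thesis
      proof (cases "w = v")
        case True then show ?thesis using nY x0v cS tn unfolding e_def t_def by simp
      next
        case nv: False
        show ?thesis
        proof (cases "w \<in> Z")
          case True
          then have "Some w \<in> S" unfolding S_def by auto
          moreover have "c w \<ge> 1" using czpos True by blast
          ultimately show ?thesis using nY nv True unfolding e_def x0_def d_def by simp
        next
          case False
          then have "Some w \<notin> S" using nY unfolding S_def by auto
          then show ?thesis using nY nv False unfolding e_def x0_def d_def by simp
        qed
      qed
    qed
  qed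
  have "(\<lambda>x y. \<exists>v. ssm_topple p x v y)\<^sup>*\<^sup>* x0 c"
    using t1 t2 fin_eq by (metis (mono_tags, lifting) converse_rtranclp_into_rtranclp)
  then have "chain_step \<mu> (ssm_topple p) d c"
    unfolding chain_step_def stabilises_to_def x0_def using std st mu by blast
  then show ?thesis using std subd cardd unfolding R_def n_def by blast
qed

lemma subc_reach:
  fixes c :: "'n::finite \<Rightarrow> nat"
  assumes p: "0 < p" "p < 1" and mu: "\<forall>i. \<mu> i > 0"
  shows "subc c \<Longrightarrow> stable c \<Longrightarrow> (chain_step \<mu> (ssm_topple p))\<^sup>*\<^sup>* cmax c"
proof (induction "card {w. c w < CARD('n) - 1}" arbitrary: c rule: less_induct)
  case less
  show ?case
  proof (cases "{w. c w < CARD('n) - 1} = {}")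
    case True
    then have "c = cmax" using less.prems unfolding stable_def cmax_def by (auto simp: fun_eq_iff not_less intro: antisym)
    then show ?thesis by simp
  next
    case False
    obtain d where d: "stable d" "subc d" "card {w. d w < CARD('n) - 1} < card {w. c w < CARD('n) - 1}"
      "chain_step \<mu> (ssm_topple p) d c"
      using predecessor[OF p mu less.prems(1,2) False] by blast
    have "(chain_step \<mu> (ssm_topple p))\<^sup>*\<^sup>* cmax d" using less.hyps[OF d(3) d(2) d(1)] .
    then show ?thesis using d(4) by (meson rtranclp.rtrancl_into_rtrancl)
  qed
qed



lemma even_prod: "even ((a::int) * (a - 1))"
  by auto

lemma aux_lin: "m + 1 \<le> (S::int) \<Longrightarrow> 2 * m \<le> 2 * (S - 1)" by (simp add: algebra_simps)

lemma sum_upd_nat: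
  fixes c :: "'a \<Rightarrow> nat"
  assumes "i \<noteq> j" "c j \<ge> 1" "finite A"
  shows "sum (c(i := c i + 1, j := c j - 1)) A + (if j \<in> A then 1 else 0) = sum c A + (if i \<in> A then 1 else 0)"
proof -
  let ?c = "c(i := c i + 1, j := c j - 1)"
  have "sum ?c A + (if j \<in> A then 1 else 0) = sum (\<lambda>w. ?c w + (if w = j then 1 else 0)) A"
    using assms(3) by (simp add: sum.distrib)
  also have "\<dots> = sum (\<lambda>w. c w + (if w = i then 1 else 0)) A"
    by (rule sum.cong) (use assms in auto)
  also have "\<dots> = sum c A + (if i \<in> A then 1 else 0)" using assms(3) by (simp add: sum.distrib)
  finally show ?thesis .
qed

lemma pair_swap:
  fixes c :: "'n::finite \<Rightarrow> nat"
  assumes sub: "subc c" and ij: "i \<noteq> j" and eq: "c i = c j"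
  shows "c j \<ge> 1 \<and> subc (c(i := c i + 1, j := c j - 1))"
proof -
  have "int (card {i, j}) * (int (card {i, j}) - 1) \<le> 2 * int (sum c {i, j})" by (rule subcD[OF sub])
  then have "2 \<le> 2 * (int (c i) + int (c j))" using ij by simp
  then have cj: "c j \<ge> 1" using eq by simp
  let ?c = "c(i := c i + 1, j := c j - 1)"
  have "subc ?c" unfolding subc_def
  proof
    fix A :: "'n set"
    have E: "sum ?c A + (if j \<in> A then 1 else 0) = sum c A + (if i \<in> A then 1 else 0)"
      by (rule sum_upd_nat[where c=c, OF ij cj]) simp
    have sA: "int (card A) * (int (card A) - 1) \<le> 2 * int (sum c A)" by (rule subcD[OF sub])
    show "int (card A) * (int (card A) - 1) \<le> 2 * int (sum ?c A)"
    proof (cases "j \<in> A \<and> i \<notin> A")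
      case False
      then have "sum c A \<le> sum ?c A" using E by (auto split: if_splits)
      then have "int (sum c A) \<le> int (sum ?c A)" by (simp only: of_nat_le_iff)
      then show ?thesis using sA by linarith
    next
      case True
      then have E2: "sum ?c A + 1 = sum c A" using E by simp
      define a where "a = int (card A)"
      have c1: "card (insert i A) = card A + 1" using True by simp
      have s1: "sum c (insert i A) = c i + sum c A" using True by simp
      have i1: "(a + 1) * a \<le> 2 * (int (c i) + int (sum c A))"
        using subcD[OF sub, of "insert i A"] c1 s1 unfolding a_def by (simp add: algebra_simps)
      have c2: "card (A - {j}) = card A - 1" using True by simp
      have "A \<noteq> {}" using True by blast
      then have ca: "card A \<ge> 1" by (simp add: Suc_le_eq card_gt_0_iff)
      have s2: "sum c A = c j + sum c (A - {j})" using True by (simp add: sum.remove)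
      have i2: "(a - 1) * (a - 2) \<le> 2 * (int (sum c A) - int (c j))"
        using subcD[OF sub, of "A - {j}"] c2 s2 ca unfolding a_def by (simp add: of_nat_diff algebra_simps)
      have "2 * (a * (a - 1)) + 2 = (a + 1) * a + (a - 1) * (a - 2)" by (simp add: algebra_simps)
      also have "\<dots> \<le> 2 * (int (c i) + int (sum c A)) + 2 * (int (sum c A) - int (c j))"
        using i1 i2 by (rule add_mono)
      also have "\<dots> = 4 * int (sum c A)" using eq by simp
      finally have "2 * (a * (a - 1)) + 2 \<le> 4 * int (sum c A)" .
      moreover obtain m where m: "a * (a - 1) = 2 * m" using even_prod[of a] by blast
      ultimately have "m + 1 \<le> int (sum c A)" by linarith
      then have "a * (a - 1) \<le> 2 * (int (sum c A) - 1)" unfolding m by (rule aux_lin)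
      moreover have "int (sum ?c A) = int (sum c A) - 1" using E2 by linarith
      ultimately show ?thesis unfolding a_def by simp
    qed
  qed
  then show ?thesis using cj by simp
qed



lemma nonfsc_pair:
  fixes c :: "'n::finite \<Rightarrow> nat"
  assumes nf: "\<not> fsc c"
  shows "\<exists>i j. i \<noteq> j \<and> c i = c j \<and> c i + 1 < CARD('n)"
proof -
  obtain A :: "'n set" where A: "A \<noteq> {}" "\<forall>i\<in>A. c i + 1 < card A"
    using nf unfolding fsc_def by (auto simp: not_le)
  have "c ` A \<subseteq> {..< card A - 1}" using A(2) by auto
  then have "card (c ` A) \<le> card A - 1" by (metis card_lessThan card_mono finite_lessThan)
  moreover have "card A \<ge> 1" using A(1) by (simp add: Suc_le_eq card_gt_0_iff)
  ultimately have "\<not> inj_on c A" using card_image by fastforce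
  then obtain i j where ij: "i \<in> A" "j \<in> A" "i \<noteq> j" "c i = c j" unfolding inj_on_def by blast
  have "card A \<le> CARD('n)" by (simp add: card_mono)
  then show ?thesis using ij A(2) by (intro exI[of _ i] exI[of _ j]) force
qed

lemma sum_two:
  fixes f :: "'n::finite \<Rightarrow> 'b::comm_monoid_add"
  assumes "i \<noteq> j"
  shows "sum f UNIV = f i + (f j + sum f (UNIV - {i, j}))"
proof -
  have "sum f UNIV = f i + sum f (UNIV - {i})" by (rule sum.remove) auto
  moreover have "sum f (UNIV - {i}) = f j + sum f (UNIV - {i} - {j})" by (rule sum.remove) (use assms in auto)
  moreover have "UNIV - {i} - {j} = UNIV - {i, j}" by auto
  ultimately show ?thesis by simp
qed

lemma poly:
  fixes c :: "'n::finite \<Rightarrow> nat"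
  shows "subc c \<Longrightarrow> stable c \<Longrightarrow> vec_of c \<in> convex hull {vec_of d | d. fsc d \<and> stable d}"
proof (induction "CARD('n) * (CARD('n) - 1)^2 - (\<Sum>w\<in>UNIV. (c w)^2)" arbitrary: c rule: less_induct)
  case less
  define H where "H = convex hull {vec_of d | d::'n\<Rightarrow>nat. fsc d \<and> stable d}"
  define N where "N = CARD('n) * (CARD('n) - 1)^2"
  have bound: "(\<Sum>w\<in>UNIV. (d w)^2) \<le> N" if "stable d" for d :: "'n \<Rightarrow> nat"
  proof -
    have "(\<Sum>w\<in>UNIV. (d w)^2) \<le> of_nat (card (UNIV::'n set)) * (CARD('n) - 1)^2"
      by (rule sum_bounded_above) (use that in \<open>auto simp: stable_def intro: power_mono\<close>)
    then show ?thesis unfolding N_def by simp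
  qed
  show ?case
  proof (cases "fsc c")
    case True
    then show ?thesis using less.prems by (intro hull_inc) blast
  next
    case False
    then obtain i j where ij: "i \<noteq> j" "c i = c j" "c i + 1 < CARD('n)" using nonfsc_pair by blast
    define c1 where "c1 = c(i := c i + 1, j := c j - 1)"
    define c2 where "c2 = c(j := c j + 1, i := c i - 1)"
    have P1: "c j \<ge> 1 \<and> subc c1" unfolding c1_def by (rule pair_swap[OF less.prems(1) ij(1,2)])
    have P2: "c i \<ge> 1 \<and> subc c2" unfolding c2_def by (rule pair_swap[OF less.prems(1) ij(1)[symmetric] ij(2)[symmetric]])
    have st1: "stable c1" using less.prems(2) ij unfolding c1_def stable_def by auto
    have st2: "stable c2" using less.prems(2) ij unfolding c2_def stable_def by auto
    define x where "x = c i"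
    have x1: "x \<ge> 1" using P2 unfolding x_def by simp
    have rest1: "sum (\<lambda>w. (c1 w)^2) (UNIV - {i, j}) = sum (\<lambda>w. (c w)^2) (UNIV - {i, j})"
      by (rule sum.cong) (auto simp: c1_def)
    have rest2: "sum (\<lambda>w. (c2 w)^2) (UNIV - {i, j}) = sum (\<lambda>w. (c w)^2) (UNIV - {i, j})"
      by (rule sum.cong) (auto simp: c2_def)
    have sq: "(x + 1)^2 + (x - 1)^2 = x^2 + x^2 + 2" using x1
      by (cases x) (auto simp: power2_eq_square algebra_simps)
    have e1: "(\<Sum>w\<in>UNIV. (c1 w)^2) = (\<Sum>w\<in>UNIV. (c w)^2) + 2"
      using sum_two[OF ij(1), of "\<lambda>w. (c1 w)^2"] sum_two[OF ij(1), of "\<lambda>w. (c w)^2"] rest1 sq ij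
      unfolding c1_def x_def by simp
    have e2: "(\<Sum>w\<in>UNIV. (c2 w)^2) = (\<Sum>w\<in>UNIV. (c w)^2) + 2"
      using sum_two[OF ij(1), of "\<lambda>w. (c2 w)^2"] sum_two[OF ij(1), of "\<lambda>w. (c w)^2"] rest2 sq ij
      unfolding c2_def x_def by (simp add: add.commute add.left_commute)
    have lt1: "N - (\<Sum>w\<in>UNIV. (c1 w)^2) < N - (\<Sum>w\<in>UNIV. (c w)^2)" using bound[OF st1] e1 by linarith
    have lt2: "N - (\<Sum>w\<in>UNIV. (c2 w)^2) < N - (\<Sum>w\<in>UNIV. (c w)^2)" using bound[OF st2] e2 by linarith
    have h1: "vec_of c1 \<in> H" unfolding H_def using less.hyps[OF lt1[unfolded N_def]] P1 st1 by blast
    have h2: "vec_of c2 \<in> H" unfolding H_def using less.hyps[OF lt2[unfolded N_def]] P2 st2 by blast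
    have "vec_of c = (1/2::real) *\<^sub>R vec_of c1 + (1/2::real) *\<^sub>R vec_of c2"
    proof (rule vec_eq_iff[THEN iffD2], rule allI)
      fix w
      show "vec_of c $ w = ((1/2::real) *\<^sub>R vec_of c1 + (1/2::real) *\<^sub>R vec_of c2) $ w"
        using ij x1 P1 unfolding vec_of_def c1_def c2_def x_def by (auto simp: of_nat_diff field_simps)
    qed
    moreover have "(1/2::real) *\<^sub>R vec_of c1 + (1/2::real) *\<^sub>R vec_of c2 \<in> H"
      unfolding H_def by (rule convexD[OF convex_convex_hull h1[unfolded H_def] h2[unfolded H_def]]) auto
    ultimately show ?thesis unfolding H_def by simp
  qed
qed



definition Kset :: "(real ^ 'n::finite) set" where
  "Kset = {x. (\<forall>A. real (card A) * (real (card A) - 1) \<le> 2 * (\<Sum>i\<in>A. x $ i)) \<and> (\<forall>i. x $ i \<le> real (CARD('n) - 1))}"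

lemma int_real_ineq: "(int a * (int a - 1) \<le> 2 * int s) \<longleftrightarrow> (real a * (real a - 1) \<le> 2 * real s)"
proof -
  have "real a * (real a - 1) = real_of_int (int a * (int a - 1))" by simp
  moreover have "2 * real s = real_of_int (2 * int s)" by simp
  ultimately show ?thesis by (simp only: of_int_le_iff)
qed

lemma vec_in_K: "vec_of (d :: 'n::finite \<Rightarrow> nat) \<in> Kset \<longleftrightarrow> subc d \<and> stable d"
proof -
  have s: "(\<Sum>i\<in>A. vec_of d $ i) = real (sum d A)" for A by (simp add: vec_of_def)
  have "(\<forall>i. vec_of d $ i \<le> real (CARD('n) - 1)) \<longleftrightarrow> stable d"
    unfolding vec_of_def stable_def by (simp only: vec_lambda_beta of_nat_le_iff)
  moreover have "(\<forall>A. real (card A) * (real (card A) - 1) \<le> 2 * (\<Sum>i\<in>A. vec_of d $ i)) \<longleftrightarrow> subc d"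
    unfolding s subc_def int_real_ineq ..
  ultimately show ?thesis unfolding Kset_def by blast
qed

lemma convex_K: "convex (Kset :: (real ^ 'n::finite) set)"
  unfolding convex_def
proof (intro ballI allI impI)
  fix x y :: "real ^ 'n" and u v :: real
  assume x: "x \<in> Kset" and y: "y \<in> Kset" and uv: "0 \<le> u" "0 \<le> v" "u + v = 1"
  show "u *\<^sub>R x + v *\<^sub>R y \<in> Kset" unfolding Kset_def
  proof (intro CollectI conjI allI)
    fix A :: "'n set"
    let ?b = "real (card A) * (real (card A) - 1)"
    have "?b \<le> 2 * (\<Sum>i\<in>A. x $ i)" "?b \<le> 2 * (\<Sum>i\<in>A. y $ i)" using x y unfolding Kset_def by auto
    then have "u * ?b \<le> u * (2 * (\<Sum>i\<in>A. x $ i))" "v * ?b \<le> v * (2 * (\<Sum>i\<in>A. y $ i))"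
      using uv by (auto intro: mult_left_mono)
    moreover have "(\<Sum>i\<in>A. (u *\<^sub>R x + v *\<^sub>R y) $ i) = u * (\<Sum>i\<in>A. x $ i) + v * (\<Sum>i\<in>A. y $ i)"
      by (simp add: sum.distrib sum_distrib_left)
    moreover have "?b = u * ?b + v * ?b"
    proof -
      have "u * ?b + v * ?b = (u + v) * ?b" by (rule distrib_right[symmetric])
      then show ?thesis using uv(3) by simp
    qed
    ultimately show "?b \<le> 2 * (\<Sum>i\<in>A. (u *\<^sub>R x + v *\<^sub>R y) $ i)" by (simp add: algebra_simps)
  next
    fix i
    let ?m = "real (CARD('n) - 1)"
    have "x $ i \<le> ?m" "y $ i \<le> ?m" using x y unfolding Kset_def by auto
    then have "u * x $ i \<le> u * ?m" "v * y $ i \<le> v * ?m" using uv by (auto intro: mult_left_mono)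
    moreover have "?m = u * ?m + v * ?m"
    proof -
      have "u * ?m + v * ?m = (u + v) * ?m" by (rule distrib_right[symmetric])
      then show ?thesis using uv(3) by simp
    qed
    ultimately show "(u *\<^sub>R x + v *\<^sub>R y) $ i \<le> ?m" by simp
  qed
qed

theorem theorem4p1:
  fixes p :: real and \<mu> :: "'n::finite \<Rightarrow> real" and c :: "'n \<Rightarrow> nat"
  assumes "0 < p" and "p < 1"
    and "\<forall>i. \<mu> i > 0" and "sum \<mu> UNIV = 1"
  shows "SR p \<mu> c \<longleftrightarrow> vec_of c \<in> convex hull {vec_of d | d. DR \<mu> d}"
proof -
  note p = assms(1,2) and mu = assms(3)
  have SRi: "SR p \<mu> d \<longleftrightarrow> stable d \<and> (chain_step \<mu> (ssm_topple p))\<^sup>*\<^sup>* cmax d" for d :: "'n \<Rightarrow> nat"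
    unfolding SR_def by (rule recurrent_iff[OF mu])
  have DRi: "DR \<mu> d \<longleftrightarrow> stable d \<and> (chain_step \<mu> asm_topple)\<^sup>*\<^sup>* cmax d" for d :: "'n \<Rightarrow> nat"
    unfolding DR_def by (rule recurrent_iff[OF mu])
  have DR_sub: "DR \<mu> d \<Longrightarrow> subc d \<and> stable d" for d :: "'n \<Rightarrow> nat"
    using DRi[of d] dr_sr[OF p] sr_subc by blast
  show ?thesis
  proof
    assume "SR p \<mu> c"
    then have st: "stable c" and sc: "subc c" using SRi sr_subc by blast+
    have "vec_of c \<in> convex hull {vec_of d | d. fsc d \<and> stable d}" by (rule poly[OF sc st])
    moreover have "{vec_of d | d. fsc d \<and> stable d} \<subseteq> {vec_of d | d. DR \<mu> d}"
      using DRi fsc_reach[OF mu] by blast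
    ultimately show "vec_of c \<in> convex hull {vec_of d | d. DR \<mu> d}" using hull_mono by blast
  next
    assume h: "vec_of c \<in> convex hull {vec_of d | d. DR \<mu> d}"
    have "{vec_of d | d. DR \<mu> d} \<subseteq> Kset" using DR_sub vec_in_K by blast
    then have "convex hull {vec_of d | d. DR \<mu> d} \<subseteq> Kset" by (rule hull_minimal) (rule convex_K)
    then have "vec_of c \<in> Kset" using h by blast
    then have "subc c" "stable c" using vec_in_K by blast+
    then show "SR p \<mu> c" using SRi subc_reach[OF p mu] by blast
  qed
qed


end
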